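(* Let $p=p_1*p_2\in\mathfrak P_2(I)$ with $p_1,p_2$ probability densities of Fisher information at most $I$, and let $p''(x)=\int_{-\infty}^{+\infty}p_1'(y)p_2'(x-y)\,dy$ (defined for every $x$; it is a Radon–Nikodym derivative of $p'$). Then for all $x$: $p(x)=0$ implies $p''(x)=0$, and $|p''(x)|\le I^{3/2}$. Moreover, $$\int_{\{p(x)>0\}}\frac{p''(x)^2}{p(x)}\,dx\le I^2.$$
   Context: $\mathfrak P_k(I)$ denotes the class of functions on $\mathbb R$ representable as a convolution of $k$ probability densities each with Fisher information at most $I$, the Fisher information of a density $q$ being $\int_{\{q>0\}}q'^2/q\,dx$ if $q$ is absolutely continuous and $+\infty$ otherwise. *)

theory Defs
  imports "HOL-Analysis.Analysis"
begin

definition prob_density :: "(real \<Rightarrow> real) \<Rightarrow> bool" where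
  "prob_density q \<longleftrightarrow> (\<forall>x. 0 \<le> q x) \<and> integrable lborel q \<and> (LINT x|lborel. q x) = 1"

text \<open>q is (locally) absolutely continuous with (Radon--Nikodym / a.e.) derivative d:
  d is locally integrable and q is the indefinite integral of d on every compact interval.\<close>
definition ac_deriv :: "(real \<Rightarrow> real) \<Rightarrow> (real \<Rightarrow> real) \<Rightarrow> bool" where
  "ac_deriv q d \<longleftrightarrow> d \<in> borel_measurable lborel \<and>
     (\<forall>a b. a \<le> b \<longrightarrow> set_integrable lborel {a..b} d \<and>
        q b - q a = (LINT x:{a..b}|lborel. d x))"

definition abs_cont :: "(real \<Rightarrow> real) \<Rightarrow> bool" where
  "abs_cont q \<longleftrightarrow> (\<exists>d. ac_deriv q d)"

text \<open>Fisher information: \<open>\<integral>_{q>0} q'^2/q\<close> if q is absolutely continuous, \<open>\<infinity>\<close> otherwise.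
  The value does not depend on the choice of the a.e. derivative.\<close>
definition fisher_info :: "(real \<Rightarrow> real) \<Rightarrow> ennreal" where
  "fisher_info q = (if abs_cont q then
      (\<integral>\<^sup>+ x. indicator {y. q y > 0} x * ennreal ((SOME d. ac_deriv q d) x ^ 2 / q x) \<partial>lborel)
    else \<infinity>)"

definition conv :: "(real \<Rightarrow> real) \<Rightarrow> (real \<Rightarrow> real) \<Rightarrow> real \<Rightarrow> real" where
  "conv f g x = (LINT y|lborel. f y * g (x - y))"

end

theory Submission imports Defs "HOL-Real_Asymp.Real_Asymp" begin

lemma ac_HK:
  assumes "ac_deriv q d" "a \<le> b"
  shows "d absolutely_integrable_on {a..b}" "q b - q a = integral {a..b} d"
proof -
  have d: "d \<in> borel_measurable lborel" and si: "set_integrable lborel {a..b} d"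
     and eq: "q b - q a = (LINT x:{a..b}|lborel. d x)"
    using assms unfolding ac_deriv_def by auto
  have "set_integrable lebesgue {a..b} d"
    using si d unfolding set_integrable_def
    by (subst integrable_completion[of _ lborel]) (auto)
  then show "d absolutely_integrable_on {a..b}" by simp
  show "q b - q a = integral {a..b} d"
    using eq set_borel_integral_eq_integral(2)[OF si] by simp
qed

lemma ac_cont:
  assumes "ac_deriv q d"
  shows "continuous_on UNIV q"
proof -
  have "isCont q x" for x
  proof -
    have int: "d integrable_on {x-1..x+1}"
      using ac_HK(1)[OF assms, of "x-1" "x+1"] 
      by (simp add: absolutely_integrable_on_def)
    have "continuous_on {x-1..x+1} (\<lambda>y. q (x-1) + integral {x-1..y} d)"
      by (intro continuous_intros indefinite_integral_continuous_1[OF int])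
    moreover have "q (x-1) + integral {x-1..y} d = q y" if "y \<in> {x-1..x+1}" for y
      using ac_HK(2)[OF assms, of "x-1" y] that by auto
    ultimately have "continuous_on {x-1..x+1} q"
      by (rule continuous_on_eq)
    then show ?thesis
      by (rule continuous_on_interior) (simp add: interior_atLeastAtMost_real)
  qed
  then show ?thesis by (simp add: continuous_at_imp_continuous_on)
qed

lemma mvt_ivt:
  fixes q Phi phi :: "real \<Rightarrow> real"
  assumes q: "continuous_on UNIV q"
    and Phi: "\<And>u. (Phi has_real_derivative phi u) (at u)"
    and uv: "u \<le> v"
  shows "\<exists>w\<in>{u..v}. Phi (q v) - Phi (q u) = phi (q w) * (q v - q u)"
proof -
  have qc: "continuous_on {u..v} q" using q by (rule continuous_on_subset) auto
  consider "q u = q v" | "q u < q v" | "q v < q u" by linarith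
  then show ?thesis
  proof cases
    case 1 then show ?thesis using uv by (intro bexI[of _ u]) auto
  next
    case 2
    obtain z where z: "q u < z" "z < q v" "Phi (q v) - Phi (q u) = (q v - q u) * phi z"
      using MVT2[OF 2, of Phi phi] Phi by blast
    obtain w where w: "u \<le> w" "w \<le> v" "q w = z"
      using IVT'[of q u z v, OF _ _ uv qc] z by auto
    show ?thesis using w z by (intro bexI[of _ w]) auto
  next
    case 3
    obtain z where z: "q v < z" "z < q u" "Phi (q u) - Phi (q v) = (q u - q v) * phi z"
      using MVT2[OF 3, of Phi phi] Phi by blast
    obtain w where w: "u \<le> w" "w \<le> v" "q w = z"
      using IVT2'[of q v z u, OF _ _ uv qc] z by auto
    show ?thesis using w z by (intro bexI[of _ w]) (auto simp: algebra_simps)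
  qed
qed

lemma chain_HK:
  fixes q d Phi phi :: "real \<Rightarrow> real"
  assumes q: "continuous_on UNIV q"
    and dint: "\<And>a b. a \<le> b \<Longrightarrow> d absolutely_integrable_on {a..b}"
    and qd: "\<And>a b. a \<le> b \<Longrightarrow> q b - q a = integral {a..b} d"
    and Phi: "\<And>u. (Phi has_real_derivative phi u) (at u)"
    and phi: "continuous_on UNIV phi"
    and st: "s \<le> t"
  shows "Phi (q t) - Phi (q s) = integral {s..t} (\<lambda>x. phi (q x) * d x)"
proof -
  define g where "g x = phi (q x) * d x" for x
  have pq: "continuous_on UNIV (\<lambda>x. phi (q x))"
    using continuous_on_compose2[OF phi q] by auto
  have gabs: "g absolutely_integrable_on {a..b}" if "a \<le> b" for a b
    unfolding g_def
  proof (rule absolutely_integrable_bounded_measurable_product_real)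
    show "(\<lambda>x. phi (q x)) \<in> borel_measurable (lebesgue_on {a..b})"
      using pq by (intro continuous_imp_measurable_on_sets_lebesgue) (auto intro: continuous_on_subset)
    show "bounded ((\<lambda>x. phi (q x)) ` {a..b})"
      using pq by (intro compact_imp_bounded compact_continuous_image) (auto intro: continuous_on_subset)
  qed (use dint that in auto)
  have gint: "g integrable_on {a..b}" if "a \<le> b" for a b
    using gabs[OF that] by (simp add: absolutely_integrable_on_def)
  have dint': "d integrable_on {a..b}" "(\<lambda>x. \<bar>d x\<bar>) integrable_on {a..b}" if "a \<le> b" for a b
    using dint[OF that] by (auto simp: absolutely_integrable_on_def)
  define F where "F u = Phi (q u) - integral {s..u} g" for u
  define G where "G u = integral {s..u} (\<lambda>x. \<bar>d x\<bar>)" for u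
  have key: "\<bar>F t - F s\<bar> \<le> e * G t" if e: "e > 0" for e
  proof -
    have uc: "uniformly_continuous_on {s..t} (\<lambda>x. phi (q x))"
      using pq by (intro compact_uniformly_continuous) (auto intro: continuous_on_subset)
    then obtain \<delta> where \<delta>: "\<delta> > 0"
      and \<delta>u: "\<And>x y. x \<in> {s..t} \<Longrightarrow> y \<in> {s..t} \<Longrightarrow> dist y x < \<delta> \<Longrightarrow> dist (phi (q y)) (phi (q x)) < e"
      unfolding uniformly_continuous_on_def using e by metis
    have loc: "\<bar>F v - F u\<bar> \<le> e * (G v - G u)" if uv: "s \<le> u" "u \<le> v" "v \<le> t" "v - u < \<delta>" for u v
    proof -
      obtain w where w: "w \<in> {u..v}" and wq: "Phi (q v) - Phi (q u) = phi (q w) * (q v - q u)"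
        using mvt_ivt[OF q Phi, of u v] uv by auto
      have c1: "integral {s..v} g = integral {s..u} g + integral {u..v} g"
        using Henstock_Kurzweil_Integration.integral_combine[of s u v g] gint[of s v] uv by auto
      have c2: "G v = G u + integral {u..v} (\<lambda>x. \<bar>d x\<bar>)"
        unfolding G_def using Henstock_Kurzweil_Integration.integral_combine[of s u v "\<lambda>x. \<bar>d x\<bar>"] dint'(2)[of s v] uv by auto
      have "Phi (q v) - Phi (q u) = integral {u..v} (\<lambda>x. phi (q w) * d x)"
        using wq qd[of u v] uv by simp
      then have "F v - F u = integral {u..v} (\<lambda>x. phi (q w) * d x) - integral {u..v} g"
        unfolding F_def using c1 by simp
      also have "\<dots> = integral {u..v} (\<lambda>x. (phi (q w) - phi (q x)) * d x)"
        using dint'(1)[of u v] gint[of u v] uv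
        by (subst integral_diff[symmetric]) (auto simp: g_def algebra_simps intro: integrable_on_mult_left integrable_on_mult_right)
      finally have eq: "F v - F u = integral {u..v} (\<lambda>x. (phi (q w) - phi (q x)) * d x)" .
      have "norm (integral {u..v} (\<lambda>x. (phi (q w) - phi (q x)) * d x)) \<le> integral {u..v} (\<lambda>x. e * \<bar>d x\<bar>)"
      proof (rule integral_norm_bound_integral)
        have "(\<lambda>x. phi (q w) * d x) integrable_on {u..v}"
          using dint'(1)[of u v] uv by (intro integrable_on_mult_right) auto
        from integrable_diff[OF this gint[of u v]] uv
        show "(\<lambda>x. (phi (q w) - phi (q x)) * d x) integrable_on {u..v}"
          by (simp add: g_def algebra_simps)
        show "(\<lambda>x. e * \<bar>d x\<bar>) integrable_on {u..v}"
          using dint'(2)[of u v] uv by (auto intro: integrable_on_mult_left integrable_on_mult_right)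
        show "norm ((phi (q w) - phi (q x)) * d x) \<le> e * \<bar>d x\<bar>" if x: "x \<in> {u..v}" for x
        proof -
          have "dist (phi (q w)) (phi (q x)) < e"
            using \<delta>u[of x w] x w uv by (auto simp: dist_real_def)
          then have "\<bar>phi (q w) - phi (q x)\<bar> \<le> e" by (simp add: dist_real_def)
          then show ?thesis by (simp add: abs_mult mult_right_mono)
        qed
      qed
      also have "\<dots> = e * integral {u..v} (\<lambda>x. \<bar>d x\<bar>)" by simp
      finally show ?thesis using eq c2 by simp
    qed
    obtain N :: nat where N: "(t - s) / \<delta> < real N" using reals_Archimedean2 by blast
    have Npos: "N > 0" using N st \<delta> by (cases "N = 0") (auto simp: field_simps)
    define h where "h = (t - s) / N"
    have h0: "h \<ge> 0" using st Npos by (simp add: h_def)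
    have hd: "h < \<delta>" using N Npos \<delta> by (simp add: h_def field_simps)
    have ind: "\<bar>F (s + real k * h) - F s\<bar> \<le> e * (G (s + real k * h) - G s)" if "k \<le> N" for k
      using that
    proof (induction k)
      case 0 then show ?case by simp
    next
      case (Suc k)
      have le: "s + real k * h + h \<le> t"
      proof -
        have "real (Suc k) * h \<le> real N * h" using Suc.prems h0 by (intro mult_right_mono) auto
        also have "\<dots> = t - s" using Npos by (simp add: h_def)
        finally show ?thesis by (simp add: algebra_simps)
      qed
      have l: "\<bar>F (s + real k * h + h) - F (s + real k * h)\<bar> \<le> e * (G (s + real k * h + h) - G (s + real k * h))"
        using loc[of "s + real k * h" "s + real k * h + h"] h0 hd le by auto
      have "\<bar>F (s + real (Suc k) * h) - F s\<bar> \<le> \<bar>F (s + real k * h + h) - F (s + real k * h)\<bar> + \<bar>F (s + real k * h) - F s\<bar>"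
        by (simp add: algebra_simps)
      also have "\<dots> \<le> e * (G (s + real k * h + h) - G (s + real k * h)) + e * (G (s + real k * h) - G s)"
        using l Suc by auto
      finally show ?case by (simp add: algebra_simps)
    qed
    have "s + real N * h = t" using Npos by (simp add: h_def)
    moreover have "G s = 0" by (simp add: G_def)
    ultimately show ?thesis using ind[of N] by simp
  qed
  have "\<bar>F t - F s\<bar> \<le> 0"
  proof (rule field_le_epsilon)
    fix e :: real assume "e > 0"
    have G0: "G t \<ge> 0" unfolding G_def using dint'(2)[OF st] by (intro integral_nonneg) auto
    show "\<bar>F t - F s\<bar> \<le> 0 + e"
    proof (cases "G t = 0")
      case True then show ?thesis using key[of 1] \<open>e>0\<close> by simp
    next
      case False
      then have "G t > 0" using G0 by simp
      then show ?thesis using key[of "e / G t"] \<open>e>0\<close> by simp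
    qed
  qed
  then have "Phi (q t) - integral {s..t} g = Phi (q s)" by (simp add: F_def)
  then show ?thesis unfolding g_def[abs_def] by linarith
qed

lemma U_int:
  fixes g :: "real \<Rightarrow> real"
  assumes g: "integrable lborel g"
   and z: "\<And>a. (LINT x|lborel. indicator {a<..} x * g x) = 0"
  shows "AE x in lborel. g x = 0"
proof -
  have gm[measurable]: "g \<in> borel_measurable borel" using g by auto
  let ?M = "density lborel (\<lambda>x. ennreal (g x))"
  let ?N = "density lborel (\<lambda>x. ennreal (- g x))"
  have eq: "emeasure ?M {a<..} = emeasure ?N {a<..}" for a
  proof -
    define h where "h x = indicator {a<..} x * g x" for x
    have hi: "integrable lborel h" unfolding h_def
      using integrable_mult_indicator[of "{a<..}" lborel g] g by simp
    have hp: "integrable lborel (\<lambda>x. max 0 (h x))" "integrable lborel (\<lambda>x. max 0 (- h x))"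
      using hi by auto
    have "(LINT x|lborel. h x) = (LINT x|lborel. max 0 (h x)) - (LINT x|lborel. max 0 (- h x))"
    proof -
      have "(LINT x|lborel. h x) = (LINT x|lborel. max 0 (h x) - max 0 (- h x))"
        by (intro Bochner_Integration.integral_cong) (auto simp: max_def)
      then show ?thesis using hp by (simp add: Bochner_Integration.integral_diff)
    qed
    then have "(LINT x|lborel. max 0 (h x)) = (LINT x|lborel. max 0 (- h x))"
      using z[of a] by (simp add: h_def)
    then have "(\<integral>\<^sup>+x. ennreal (max 0 (h x)) \<partial>lborel) = (\<integral>\<^sup>+x. ennreal (max 0 (- h x)) \<partial>lborel)"
      using hp by (simp add: nn_integral_eq_integral)
    then have "(\<integral>\<^sup>+x. ennreal (h x) \<partial>lborel) = (\<integral>\<^sup>+x. ennreal (- h x) \<partial>lborel)"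
      by (simp add: ennreal_max_0)
    moreover have "(\<integral>\<^sup>+x. ennreal (h x) \<partial>lborel) = (\<integral>\<^sup>+x. ennreal (g x) * indicator {a<..} x \<partial>lborel)"
      by (intro nn_integral_cong) (auto simp: h_def indicator_def)
    moreover have "(\<integral>\<^sup>+x. ennreal (- h x) \<partial>lborel) = (\<integral>\<^sup>+x. ennreal (- g x) * indicator {a<..} x \<partial>lborel)"
      by (intro nn_integral_cong) (auto simp: h_def indicator_def)
    ultimately show ?thesis by (simp add: emeasure_density)
  qed
  have fin: "emeasure ?M {a<..} < \<infinity>" for a
  proof -
    have "emeasure ?M {a<..} = (\<integral>\<^sup>+x. ennreal (g x) * indicator {a<..} x \<partial>lborel)"
      by (simp add: emeasure_density)
    also have "\<dots> \<le> (\<integral>\<^sup>+x. ennreal (norm (g x)) \<partial>lborel)"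
      by (intro nn_integral_mono) (auto simp: indicator_def)
    also have "\<dots> < \<infinity>" using g by (simp add: integrable_iff_bounded)
    finally show ?thesis .
  qed
  have "?M = ?N"
    by (rule measure_eqI_lessThan) (use eq fin in auto)
  then have "AE x in lborel. ennreal (g x) = ennreal (- g x)"
    by (intro sigma_finite_measure.density_unique[OF sigma_finite_lborel]) auto
  then show ?thesis
  proof (rule AE_mp, intro AE_I2 impI)
    fix x assume "ennreal (g x) = ennreal (- g x)"
    then show "g x = 0"
      by (cases "g x > 0"; cases "g x < 0") (auto simp: ennreal_neg)
  qed
qed

lemma U_Icc:
  fixes f :: "real \<Rightarrow> real"
  assumes f[measurable]: "f \<in> borel_measurable borel"
   and si: "\<And>a b. set_integrable lborel {a..b} f"
   and z: "\<And>a b. a \<le> b \<Longrightarrow> (LINT x:{a..b}|lborel. f x) = 0"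
  shows "AE x in lborel. f x = 0"
proof -
  have n: "AE x in lborel. indicator {- real n..real n} x * f x = 0" for n :: nat
  proof (rule U_int)
    show "integrable lborel (\<lambda>x. indicator {- real n..real n} x * f x)"
      using si[of "- real n" "real n"] by (simp add: set_integrable_def)
    fix a :: real
    have "AE x in lborel. x \<noteq> a" by (rule AE_lborel_singleton)
    then have ae: "AE x in lborel. indicator {a<..} x * (indicator {- real n..real n} x * f x)
       = indicator {max a (- real n)..real n} x * f x"
      by eventually_elim (auto simp: indicator_def)
    have "(LINT x|lborel. indicator {a<..} x * (indicator {- real n..real n} x * f x))
        = (LINT x|lborel. indicator {max a (- real n)..real n} x * f x)"
      by (rule integral_cong_AE) (use ae in auto)
    also have "\<dots> = 0"
    proof (cases "max a (- real n) \<le> real n")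
      case True then show ?thesis using z[OF True] by (simp add: set_lebesgue_integral_def)
    next
      case False then show ?thesis by simp
    qed
    finally show "(LINT x|lborel. indicator {a<..} x * (indicator {- real n..real n} x * f x)) = 0" .
  qed
  have "AE x in lborel. \<forall>n::nat. indicator {- real n..real n} x * f x = 0"
    unfolding AE_all_countable using n by blast
  then show ?thesis
  proof (rule AE_mp, intro AE_I2 impI)
    fix x assume H: "\<forall>n::nat. indicator {- real n..real n} x * f x = 0"
    obtain n :: nat where "\<bar>x\<bar> \<le> real n" using real_arch_simple by blast
    then show "f x = 0" using H[rule_format, of n] by (auto simp: indicator_def split: if_splits)
  qed
qed

lemma inv_sq_lim:
  fixes c :: real
  assumes "c \<noteq> 0"
  shows "(\<lambda>n. inverse (1 + (real (Suc n) * c)\<^sup>2)) \<longlonglongrightarrow> 0"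
proof -
  have "c\<^sup>2 > 0" using assms by simp
  then have "(\<lambda>n. inverse (1 + real (Suc n) ^ 2 * c\<^sup>2)) \<longlonglongrightarrow> 0"
    by real_asymp
  then show ?thesis by (simp add: power_mult_distrib)
qed

lemma zero_deriv:
  fixes q d :: "real \<Rightarrow> real"
  assumes ac: "ac_deriv q d" and nn: "\<And>x. 0 \<le> q x"
  shows "AE x in lborel. q x = 0 \<longrightarrow> d x = 0"
proof -
  have qc: "continuous_on UNIV q" by (rule ac_cont[OF ac])
  have qm[measurable]: "q \<in> borel_measurable borel" by (rule borel_measurable_continuous_onI[OF qc])
  have dm[measurable]: "d \<in> borel_measurable borel" using ac by (simp add: ac_deriv_def)
  have dsi: "set_integrable lborel {a..b} d" for a b
  proof (cases "a \<le> b")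
    case True then show ?thesis using ac by (simp add: ac_deriv_def)
  next
    case False then show ?thesis by (simp add: set_integrable_def)
  qed
  define f where "f x = indicator {x. q x = 0} x * d x" for x
  have fm[measurable]: "f \<in> borel_measurable borel" unfolding f_def by measurable
  have bsi: "set_integrable lborel {a..b} h"
    if hm: "h \<in> borel_measurable borel" and hb: "\<And>x. \<bar>h x\<bar> \<le> \<bar>d x\<bar>" for a b h
    using dsi[of a b] unfolding set_integrable_def
    by (rule Bochner_Integration.integrable_bound) (use hm hb in \<open>auto simp: indicator_def\<close>)
  have "AE x in lborel. f x = 0"
  proof (rule U_Icc[OF fm])
    show "set_integrable lborel {a..b} f" for a b
      by (rule bsi) (auto simp: f_def indicator_def)
    fix a b :: real assume ab: "a \<le> b"
    define c where "c n = real (Suc n)" for n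
    define phi where "phi n u = inverse (1 + (c n * u)\<^sup>2)" for n u
    define Phi where "Phi n u = arctan (c n * u) / c n" for n u
    have c0: "c n > 0" for n by (simp add: c_def)
    have phim[measurable]: "(\<lambda>x. phi n (q x) * d x) \<in> borel_measurable borel" for n
      unfolding phi_def by measurable
    have phib: "\<bar>phi n u\<bar> \<le> 1" for n u
      unfolding phi_def by (simp add: inverse_le_1_iff)
    have nz: "1 + (c n * u)\<^sup>2 \<noteq> 0" for n u
      by (metis add_pos_nonneg zero_less_one zero_le_power2 less_irrefl)
    have der: "(Phi n has_real_derivative phi n u) (at u)" for n u
    proof -
      have "((\<lambda>u. arctan (c n * u)) has_real_derivative (inverse (1 + (c n * u)^2) * (c n * 1))) (at u)"
        by (rule DERIV_chain2[OF DERIV_arctan]) (auto intro!: derivative_eq_intros)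
      from DERIV_cdivide[OF this, of "c n"] show ?thesis
        unfolding Phi_def phi_def using c0[of n] by simp
    qed
    have phic: "continuous_on UNIV (phi n)" for n
      unfolding phi_def using nz by (intro continuous_intros) auto
    have eqn: "Phi n (q b) - Phi n (q a) = (LINT x:{a..b}|lborel. phi n (q x) * d x)" for n
    proof -
      have si: "set_integrable lborel {a..b} (\<lambda>x. phi n (q x) * d x)"
        by (rule bsi) (use phib in \<open>auto simp: abs_mult intro!: mult_left_le_one_le\<close>)
      show ?thesis
        using chain_HK[OF qc ac_HK(1)[OF ac] ac_HK(2)[OF ac] der phic ab]
          set_borel_integral_eq_integral(2)[OF si] by simp
    qed
    have lim1: "(\<lambda>n. LINT x:{a..b}|lborel. phi n (q x) * d x) \<longlonglongrightarrow> (LINT x:{a..b}|lborel. f x)"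
      unfolding set_lebesgue_integral_def
    proof (rule integral_dominated_convergence[where w="\<lambda>x. indicator {a..b} x * \<bar>d x\<bar>"])
      show "integrable lborel (\<lambda>x. indicator {a..b} x * \<bar>d x\<bar>)"
      proof -
        have "integrable lborel (\<lambda>x. \<bar>indicator {a..b} x * d x\<bar>)"
          using dsi[of a b] unfolding set_integrable_def by (intro integrable_abs) simp
        then show ?thesis by (simp add: abs_mult)
      qed
      show "AE x in lborel. (\<lambda>n. indicator {a..b} x *\<^sub>R (phi n (q x) * d x)) \<longlonglongrightarrow> indicator {a..b} x *\<^sub>R f x"
      proof (intro AE_I2)
        fix x
        show "(\<lambda>n. indicator {a..b} x *\<^sub>R (phi n (q x) * d x)) \<longlonglongrightarrow> indicator {a..b} x *\<^sub>R f x"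
        proof (cases "q x = 0")
          case True then show ?thesis by (simp add: phi_def f_def)
        next
          case False
          have "(\<lambda>n. phi n (q x)) \<longlonglongrightarrow> 0"
            unfolding phi_def c_def using inv_sq_lim[OF False] by simp
          then have "(\<lambda>n. indicator {a..b} x * (phi n (q x) * d x)) \<longlonglongrightarrow> indicator {a..b} x * (0 * d x)"
            by (intro tendsto_intros)
          then show ?thesis using False by (simp add: f_def)
        qed
      qed
      show "AE x in lborel. norm (indicator {a..b} x *\<^sub>R (phi n (q x) * d x)) \<le> indicator {a..b} x * \<bar>d x\<bar>" for n
        using phib by (intro AE_I2) (auto simp: indicator_def abs_mult intro!: mult_left_le_one_le)
    qed auto
    have lim2: "(\<lambda>n. Phi n (q b) - Phi n (q a)) \<longlonglongrightarrow> 0"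
    proof (rule Lim_null_comparison)
      show "\<forall>\<^sub>F n in sequentially. norm (Phi n (q b) - Phi n (q a)) \<le> pi / real (Suc n)"
      proof (intro always_eventually allI)
        fix n
        have b1: "\<bar>arctan y\<bar> \<le> pi / 2" for y using arctan_bounded[of y] by auto
        have "\<bar>Phi n (q b) - Phi n (q a)\<bar> \<le> \<bar>arctan (c n * q b)\<bar> / c n + \<bar>arctan (c n * q a)\<bar> / c n"
          unfolding Phi_def using c0[of n] by (simp add: abs_divide diff_divide_distrib[symmetric] abs_triangle_ineq4 add_divide_distrib[symmetric] divide_right_mono)
        also have "\<dots> \<le> (pi/2) / c n + (pi/2) / c n"
          using c0[of n] b1 by (intro add_mono divide_right_mono) auto
        also have "\<dots> = (pi/2 + pi/2) / c n" by (simp only: add_divide_distrib)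
        also have "\<dots> = pi / real (Suc n)" by (simp add: c_def)
        finally show "norm (Phi n (q b) - Phi n (q a)) \<le> pi / real (Suc n)" by simp
      qed
      show "(\<lambda>n. pi / real (Suc n)) \<longlonglongrightarrow> 0" by real_asymp
    qed
    show "(LINT x:{a..b}|lborel. f x) = 0"
      using LIMSEQ_unique[OF lim1] lim2 eqn by simp
  qed
  then show ?thesis
    by (rule AE_mp) (auto simp: f_def)
qed

lemma ac_deriv_ae_unique:
  fixes q d e :: "real \<Rightarrow> real"
  assumes d: "ac_deriv q d" and e: "ac_deriv q e"
  shows "AE x in lborel. e x = d x"
proof -
  have dm[measurable]: "d \<in> borel_measurable borel" and em[measurable]: "e \<in> borel_measurable borel"
    using d e by (auto simp: ac_deriv_def)
  have si: "set_integrable lborel {a..b} d" "set_integrable lborel {a..b} e" for a b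
    using d e by (cases "a \<le> b"; auto simp: ac_deriv_def set_integrable_def)+
  have "AE x in lborel. e x - d x = 0"
  proof (rule U_Icc)
    show "set_integrable lborel {a..b} (\<lambda>x. e x - d x)" for a b using si by auto
    show "(LINT x:{a..b}|lborel. e x - d x) = 0" if "a \<le> b" for a b
      using si[of a b] d e that by (simp add: ac_deriv_def)
  qed auto
  then show ?thesis by auto
qed

definition wfun :: "(real \<Rightarrow> real) \<Rightarrow> (real \<Rightarrow> real) \<Rightarrow> real \<Rightarrow> real" where
  "wfun q d x = (if q x > 0 then (d x)\<^sup>2 / q x else 0)"

lemma wfun_nonneg: "wfun q d x \<ge> 0"
  by (simp add: wfun_def)

lemma wfun_meas[measurable]:
  assumes [measurable]: "q \<in> borel_measurable borel" "d \<in> borel_measurable borel"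
  shows "wfun q d \<in> borel_measurable borel"
  unfolding wfun_def[abs_def] by measurable

lemma fisher_w:
  fixes q d :: "real \<Rightarrow> real"
  assumes fi: "fisher_info q \<le> ennreal I" and ac: "ac_deriv q d"
  shows "(\<integral>\<^sup>+x. ennreal (wfun q d x) \<partial>lborel) \<le> ennreal I"
proof -
  have abs: "abs_cont q" using ac by (auto simp: abs_cont_def)
  define e where "e = (SOME d. ac_deriv q d)"
  have e: "ac_deriv q e" unfolding e_def using abs unfolding abs_cont_def by (rule someI_ex)
  have "AE x in lborel. e x = d x" by (rule ac_deriv_ae_unique[OF ac e])
  then have "(\<integral>\<^sup>+ x. indicator {y. q y > 0} x * ennreal (e x ^ 2 / q x) \<partial>lborel)
      = (\<integral>\<^sup>+x. ennreal (wfun q d x) \<partial>lborel)"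
    by (intro nn_integral_cong_AE) (auto simp: wfun_def indicator_def)
  then show ?thesis using fi abs by (simp add: fisher_info_def e_def)
qed

lemma density_facts:
  fixes q d :: "real \<Rightarrow> real" and I :: real
  assumes pd: "prob_density q" and fi: "fisher_info q \<le> ennreal I" and ac: "ac_deriv q d"
  shows "AE x in lborel. (d x)\<^sup>2 = wfun q d x * q x"
    and "I > 0"
    and "\<And>x. q x \<le> sqrt I"
proof -
  have qnn: "\<And>x. 0 \<le> q x" and qi: "integrable lborel q" and q1: "(LINT x|lborel. q x) = 1"
    using pd by (auto simp: prob_density_def)
  have qm[measurable]: "q \<in> borel_measurable borel" using qi by auto
  have dm[measurable]: "d \<in> borel_measurable borel" using ac by (simp add: ac_deriv_def)
  have wI: "(\<integral>\<^sup>+x. ennreal (wfun q d x) \<partial>lborel) \<le> ennreal I" by (rule fisher_w[OF fi ac])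
  show ae: "AE x in lborel. (d x)\<^sup>2 = wfun q d x * q x"
    using zero_deriv[OF ac qnn] by (rule AE_mp) (auto simp: wfun_def order_less_le qnn intro!: AE_I2)
  have qn1: "(\<integral>\<^sup>+x. ennreal (q x) \<partial>lborel) = 1"
    using qi qnn q1 by (simp add: nn_integral_eq_integral)
  define K where "K = (\<integral>\<^sup>+x. ennreal \<bar>d x\<bar> \<partial>lborel)"
  have K2: "K\<^sup>2 \<le> ennreal I"
  proof -
    have "K = (\<integral>\<^sup>+x. ennreal (sqrt (wfun q d x)) * ennreal (sqrt (q x)) \<partial>lborel)"
      unfolding K_def using ae
    proof (intro nn_integral_cong_AE, elim AE_mp, intro AE_I2 impI)
      fix x assume "(d x)\<^sup>2 = wfun q d x * q x"
      then have "\<bar>d x\<bar> = sqrt (wfun q d x) * sqrt (q x)"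
        by (metis real_sqrt_abs real_sqrt_mult)
      then show "ennreal \<bar>d x\<bar> = ennreal (sqrt (wfun q d x)) * ennreal (sqrt (q x))"
        by (simp add: ennreal_mult wfun_nonneg qnn)
    qed
    then have "K\<^sup>2 \<le> (\<integral>\<^sup>+x. ennreal (sqrt (wfun q d x)) ^ 2 \<partial>lborel) * (\<integral>\<^sup>+x. ennreal (sqrt (q x)) ^ 2 \<partial>lborel)"
      by (simp add: Cauchy_Schwarz_nn_integral)
    also have "\<dots> = (\<integral>\<^sup>+x. ennreal (wfun q d x) \<partial>lborel) * (\<integral>\<^sup>+x. ennreal (q x) \<partial>lborel)"
      by (simp add: ennreal_power wfun_nonneg qnn)
    also have "\<dots> \<le> ennreal I" using wI qn1 by simp
    finally show ?thesis .
  qed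
  have qK: "ennreal (q x) \<le> K" for x
  proof (rule ennreal_le_epsilon)
    fix \<epsilon> :: real assume "\<epsilon> > 0"
    have "\<exists>y<x. q y < \<epsilon>"
    proof (rule ccontr)
      assume "\<not> ?thesis"
      then have ge: "\<And>y. y < x \<Longrightarrow> \<epsilon> \<le> q y" by force
      have "ennreal 2 = (\<integral>\<^sup>+y. ennreal \<epsilon> * indicator {x - 2/\<epsilon> ..< x} y \<partial>lborel)"
        using \<open>\<epsilon> > 0\<close> by (simp add: nn_integral_cmult_indicator ennreal_mult[symmetric])
      also have "\<dots> \<le> (\<integral>\<^sup>+y. ennreal (q y) \<partial>lborel)"
        by (intro nn_integral_mono) (auto simp: indicator_def ge ennreal_leI)
      finally show False using qn1 by simp
    qed
    then obtain y where y: "y < x" "q y < \<epsilon>" by blast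
    have si: "set_integrable lborel {y..x} d" using ac y by (simp add: ac_deriv_def)
    have "q x - q y = (LINT t:{y..x}|lborel. d t)" using ac y by (simp add: ac_deriv_def)
    also have "\<dots> \<le> (LINT t:{y..x}|lborel. \<bar>d t\<bar>)"
      using si by (intro set_integral_mono) (auto simp: set_integrable_abs)
    finally have "ennreal (q x - q y) \<le> ennreal (LINT t:{y..x}|lborel. \<bar>d t\<bar>)"
      by (rule ennreal_leI)
    also have "\<dots> = (\<integral>\<^sup>+t. ennreal (indicator {y..x} t * \<bar>d t\<bar>) \<partial>lborel)"
      using set_integrable_abs[OF si]
      by (subst nn_integral_eq_integral) (auto simp: set_integrable_def set_lebesgue_integral_def)
    also have "\<dots> \<le> K" unfolding K_def
      by (intro nn_integral_mono) (auto simp: indicator_def)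
    finally have "ennreal (q x - q y) \<le> K" .
    have "ennreal (q x) \<le> ennreal (q x - q y) + ennreal (q y)"
    proof (cases "q x \<ge> q y")
      case True then show ?thesis using qnn[of y] by (simp add: ennreal_plus[symmetric])
    next
      case False
      then have "ennreal (q x - q y) = 0" by (simp add: ennreal_neg)
      then show ?thesis using False by (simp add: ennreal_leI)
    qed
    also have "\<dots> \<le> K + ennreal \<epsilon>"
      using \<open>ennreal (q x - q y) \<le> K\<close> y by (intro add_mono ennreal_leI) auto
    finally show "ennreal (q x) \<le> K + ennreal \<epsilon>" .
  qed
  have sq: "ennreal ((q x)\<^sup>2) \<le> ennreal I" for x
  proof -
    have "ennreal ((q x)\<^sup>2) = (ennreal (q x))\<^sup>2" by (simp add: ennreal_power qnn)
    also have "\<dots> \<le> K\<^sup>2" using qK[of x] by (intro power_mono) auto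
    finally show ?thesis using K2 by simp
  qed
  show "I > 0"
  proof (rule ccontr)
    assume "\<not> I > 0"
    then have "(q x)\<^sup>2 \<le> 0" for x using sq[of x] by (simp add: ennreal_neg)
    then have "q x = 0" for x by (metis power2_less_eq_zero_iff not_less order.antisym zero_le_power2)
    then show False using q1 by simp
  qed
  then show "q x \<le> sqrt I" for x
    using sq[of x] qnn[of x] by (simp add: real_le_rsqrt)
qed

lemma ennreal_sq_le:
  assumes "A\<^sup>2 \<le> (ennreal c)\<^sup>2" "0 \<le> c"
  shows "A \<le> ennreal c"
proof (cases A rule: ennreal_cases)
  case (real a)
  then have "a\<^sup>2 \<le> c\<^sup>2" using assms by (simp add: ennreal_power)
  then have "a \<le> c" using assms(2) by (rule power2_le_imp_le)
  then show ?thesis using real by (simp add: ennreal_leI)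
next
  case top
  then show ?thesis using assms by (simp add: ennreal_power top_unique)
qed

lemma nn_transl:
  fixes f :: "real \<Rightarrow> ennreal"
  assumes [measurable]: "f \<in> borel_measurable borel"
  shows "(\<integral>\<^sup>+y. f (x - y) \<partial>lborel) = (\<integral>\<^sup>+y. f y \<partial>lborel)"
  using nn_integral_real_affine[of f "-1" x] by simp

lemma pointwise:
  fixes p1 p2 d1 d2 w1 w2 :: "real \<Rightarrow> real" and I x :: real
  assumes [measurable]: "p1 \<in> borel_measurable borel" "p2 \<in> borel_measurable borel"
      "d1 \<in> borel_measurable borel" "d2 \<in> borel_measurable borel"
      "w1 \<in> borel_measurable borel" "w2 \<in> borel_measurable borel"
    and nn: "\<And>y. 0 \<le> p1 y" "\<And>y. 0 \<le> p2 y" "\<And>y. 0 \<le> w1 y" "\<And>y. 0 \<le> w2 y"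
    and ae1: "AE y in lborel. (d1 y)\<^sup>2 = w1 y * p1 y"
    and ae2: "AE y in lborel. (d2 y)\<^sup>2 = w2 y * p2 y"
    and b1: "\<And>y. p1 y \<le> sqrt I" and b2: "\<And>y. p2 y \<le> sqrt I"
    and I1: "(\<integral>\<^sup>+y. ennreal (w1 y) \<partial>lborel) \<le> ennreal I"
    and I2: "(\<integral>\<^sup>+y. ennreal (w2 y) \<partial>lborel) \<le> ennreal I"
    and p1i: "integrable lborel p1" and Ipos: "I > 0"
  shows "integrable lborel (\<lambda>y. d1 y * d2 (x - y))"
    and "\<bar>conv d1 d2 x\<bar> \<le> I powr (3/2)"
    and "conv p1 p2 x = 0 \<Longrightarrow> conv d1 d2 x = 0"
    and "conv p1 p2 x > 0 \<Longrightarrow> ennreal ((conv d1 d2 x)\<^sup>2 / conv p1 p2 x) \<le> (\<integral>\<^sup>+y. ennreal (w1 y * w2 (x - y)) \<partial>lborel)"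
proof -
  have ae2': "AE y in lborel. (d2 (x - y))\<^sup>2 = w2 (x - y) * p2 (x - y)"
    using AE_borel_affine[of "-1" "\<lambda>z. (d2 z)\<^sup>2 = w2 z * p2 z" x, OF _ _ ae2] by simp
  have sq: "AE y in lborel. (d1 y * d2 (x - y))\<^sup>2 = (w1 y * p2 (x - y)) * (p1 y * w2 (x - y))"
    using ae1 ae2' by eventually_elim (simp add: power_mult_distrib)
  define A where "A = (\<integral>\<^sup>+y. ennreal \<bar>d1 y * d2 (x - y)\<bar> \<partial>lborel)"
  have sqrtmul: "\<bar>a\<bar> = sqrt b * sqrt c" if "a\<^sup>2 = b * c" for a b c :: real
    by (metis real_sqrt_abs real_sqrt_mult that)
  have IsI: "ennreal (sqrt I) * ennreal I = ennreal (I powr (3/2))"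
  proof -
    have "sqrt I * I = I powr (1/2) * I powr 1"
      using Ipos by (simp add: powr_half_sqrt)
    also have "\<dots> = I powr (1/2 + 1)" by (rule powr_add[symmetric])
    also have "\<dots> = I powr (3/2)" by simp
    finally have "sqrt I * I = I powr (3/2)" .
    then show ?thesis using Ipos by (simp add: ennreal_mult[symmetric])
  qed
  have A_le: "A \<le> ennreal (I powr (3/2))"
  proof -
    have "A = (\<integral>\<^sup>+y. ennreal (sqrt (w1 y * p2 (x - y))) * ennreal (sqrt (p1 y * w2 (x - y))) \<partial>lborel)"
      unfolding A_def using sq
      by (intro nn_integral_cong_AE, elim AE_mp, intro AE_I2 impI)
         (simp add: ennreal_mult[symmetric] sqrtmul nn)
    then have "A\<^sup>2 \<le> (\<integral>\<^sup>+y. ennreal (sqrt (w1 y * p2 (x - y))) ^ 2 \<partial>lborel) * (\<integral>\<^sup>+y. ennreal (sqrt (p1 y * w2 (x - y))) ^ 2 \<partial>lborel)"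
      by (simp add: Cauchy_Schwarz_nn_integral)
    also have "\<dots> = (\<integral>\<^sup>+y. ennreal (w1 y) * ennreal (p2 (x - y)) \<partial>lborel) * (\<integral>\<^sup>+y. ennreal (w2 (x - y)) * ennreal (p1 y) \<partial>lborel)"
      by (simp add: ennreal_power nn ennreal_mult[symmetric] mult.commute)
    also have "\<dots> \<le> ((\<integral>\<^sup>+y. ennreal (w1 y) \<partial>lborel) * ennreal (sqrt I)) * ((\<integral>\<^sup>+y. ennreal (w2 (x - y)) \<partial>lborel) * ennreal (sqrt I))"
    proof (intro mult_mono)
      show "(\<integral>\<^sup>+y. ennreal (w1 y) * ennreal (p2 (x - y)) \<partial>lborel) \<le> (\<integral>\<^sup>+y. ennreal (w1 y) \<partial>lborel) * ennreal (sqrt I)"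
        by (subst nn_integral_multc[symmetric]) (auto intro!: nn_integral_mono mult_left_mono ennreal_leI b2)
      show "(\<integral>\<^sup>+y. ennreal (w2 (x - y)) * ennreal (p1 y) \<partial>lborel) \<le> (\<integral>\<^sup>+y. ennreal (w2 (x - y)) \<partial>lborel) * ennreal (sqrt I)"
        by (subst nn_integral_multc[symmetric]) (auto intro!: nn_integral_mono mult_left_mono ennreal_leI b1)
    qed auto
    also have "\<dots> \<le> (ennreal I * ennreal (sqrt I)) * (ennreal I * ennreal (sqrt I))"
      using I1 I2 nn_transl[of "\<lambda>y. ennreal (w2 y)" x]
      by (intro mult_mono) auto
    also have "\<dots> = (ennreal (I powr (3/2)))\<^sup>2"
      using IsI by (simp add: power2_eq_square mult.commute)
    finally have "A\<^sup>2 \<le> (ennreal (I powr (3/2)))\<^sup>2" .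
    then show ?thesis by (rule ennreal_sq_le) simp
  qed
  show int: "integrable lborel (\<lambda>y. d1 y * d2 (x - y))"
  proof (rule integrableI_bounded)
    show "(\<integral>\<^sup>+y. ennreal (norm (d1 y * d2 (x - y))) \<partial>lborel) < \<infinity>"
      using A_le unfolding A_def by (simp add: le_less_trans)
  qed measurable
  have absint: "ennreal (LINT y|lborel. \<bar>d1 y * d2 (x - y)\<bar>) = A"
    unfolding A_def using int by (subst nn_integral_eq_integral) auto
  have absD: "ennreal \<bar>conv d1 d2 x\<bar> \<le> A"
  proof -
    have "\<bar>conv d1 d2 x\<bar> \<le> (LINT y|lborel. \<bar>d1 y * d2 (x - y)\<bar>)"
      unfolding conv_def using integral_norm_bound[of lborel "\<lambda>y. d1 y * d2 (x - y)"] by simp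
    then show ?thesis using absint by (metis ennreal_leI)
  qed
  show "\<bar>conv d1 d2 x\<bar> \<le> I powr (3/2)"
    using order.trans[OF absD A_le] by simp
  have pint: "integrable lborel (\<lambda>y. p1 y * p2 (x - y))"
  proof (rule Bochner_Integration.integrable_bound)
    show "integrable lborel (\<lambda>y. sqrt I * p1 y)" using p1i by simp
    show "AE y in lborel. norm (p1 y * p2 (x - y)) \<le> norm (sqrt I * p1 y)"
    proof (intro AE_I2)
      fix y
      have "p1 y * p2 (x - y) \<le> p1 y * sqrt I" using mult_left_mono[OF b2[of "x - y"] nn(1)[of y]] .
      then show "norm (p1 y * p2 (x - y)) \<le> norm (sqrt I * p1 y)"
        using nn(1)[of y] nn(2)[of "x - y"] Ipos by (simp add: abs_mult mult.commute)
    qed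
  qed measurable
  show "conv d1 d2 x = 0" if z: "conv p1 p2 x = 0"
  proof -
    have "AE y in lborel. p1 y * p2 (x - y) = 0"
      using z pint nn by (subst integral_nonneg_eq_0_iff_AE[symmetric]) (auto simp: conv_def)
    then have "AE y in lborel. d1 y * d2 (x - y) = 0"
      using sq
    proof eventually_elim
      case (elim y)
      have "(d1 y * d2 (x - y))\<^sup>2 = (w1 y * w2 (x - y)) * (p1 y * p2 (x - y))"
        using elim(2) by (simp add: mult_ac)
      then show ?case using elim(1) by simp
    qed
    then show ?thesis unfolding conv_def by (rule integral_eq_zero_AE)
  qed
  show "ennreal ((conv d1 d2 x)\<^sup>2 / conv p1 p2 x) \<le> (\<integral>\<^sup>+y. ennreal (w1 y * w2 (x - y)) \<partial>lborel)"
    if pos: "conv p1 p2 x > 0"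
  proof -
    define B where "B = (\<integral>\<^sup>+y. ennreal (w1 y * w2 (x - y)) \<partial>lborel)"
    have "A = (\<integral>\<^sup>+y. ennreal (sqrt (p1 y * p2 (x - y))) * ennreal (sqrt (w1 y * w2 (x - y))) \<partial>lborel)"
      unfolding A_def using sq
    proof (intro nn_integral_cong_AE, elim AE_mp, intro AE_I2 impI)
      fix y assume h: "(d1 y * d2 (x - y))\<^sup>2 = w1 y * p2 (x - y) * (p1 y * w2 (x - y))"
      have "(d1 y * d2 (x - y))\<^sup>2 = (p1 y * p2 (x - y)) * (w1 y * w2 (x - y))"
        using h by (simp add: mult_ac)
      then have "\<bar>d1 y * d2 (x - y)\<bar> = sqrt (p1 y * p2 (x - y)) * sqrt (w1 y * w2 (x - y))"
        by (rule sqrtmul)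
      then show "ennreal \<bar>d1 y * d2 (x - y)\<bar> = ennreal (sqrt (p1 y * p2 (x - y))) * ennreal (sqrt (w1 y * w2 (x - y)))"
        by (simp add: ennreal_mult[symmetric] nn)
    qed
    then have "A\<^sup>2 \<le> (\<integral>\<^sup>+y. ennreal (sqrt (p1 y * p2 (x - y))) ^ 2 \<partial>lborel) * (\<integral>\<^sup>+y. ennreal (sqrt (w1 y * w2 (x - y))) ^ 2 \<partial>lborel)"
      by (simp add: Cauchy_Schwarz_nn_integral)
    also have "\<dots> = (\<integral>\<^sup>+y. ennreal (p1 y * p2 (x - y)) \<partial>lborel) * B"
      unfolding B_def by (simp add: ennreal_power nn)
    also have "(\<integral>\<^sup>+y. ennreal (p1 y * p2 (x - y)) \<partial>lborel) = ennreal (conv p1 p2 x)"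
      unfolding conv_def using pint nn by (subst nn_integral_eq_integral) auto
    finally have AB: "A\<^sup>2 \<le> ennreal (conv p1 p2 x) * B" .
    have "ennreal ((conv d1 d2 x)\<^sup>2) = (ennreal \<bar>conv d1 d2 x\<bar>)\<^sup>2"
      by (simp add: ennreal_power)
    also have "\<dots> \<le> A\<^sup>2" using absD by (intro power_mono) auto
    finally have DB: "ennreal ((conv d1 d2 x)\<^sup>2) \<le> ennreal (conv p1 p2 x) * B"
      using AB by simp
    show ?thesis
    proof (cases B rule: ennreal_cases)
      case (real b)
      then have "(conv d1 d2 x)\<^sup>2 \<le> conv p1 p2 x * b"
        using DB pos by (simp add: ennreal_mult[symmetric])
      then have "(conv d1 d2 x)\<^sup>2 / conv p1 p2 x \<le> b"
        using pos by (simp add: divide_le_eq mult.commute)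
      then show ?thesis using real unfolding B_def by (simp add: ennreal_leI)
    next
      case top then show ?thesis unfolding B_def by simp
    qed
  qed
qed

theorem proposition6p3:
  fixes p1 p2 d1 d2 :: "real \<Rightarrow> real" and I :: real
  assumes "prob_density p1" and "prob_density p2"
    and "fisher_info p1 \<le> ennreal I" and "fisher_info p2 \<le> ennreal I"
    and "ac_deriv p1 d1" and "ac_deriv p2 d2"
  shows "(\<forall>x. integrable lborel (\<lambda>y. d1 y * d2 (x - y)))
    \<and> (\<forall>x. conv p1 p2 x = 0 \<longrightarrow> conv d1 d2 x = 0)
    \<and> (\<forall>x. \<bar>conv d1 d2 x\<bar> \<le> I powr (3/2))
    \<and> (\<integral>\<^sup>+ x. indicator {y. conv p1 p2 y > 0} x
            * ennreal ((conv d1 d2 x)\<^sup>2 / conv p1 p2 x) \<partial>lborel) \<le> ennreal (I\<^sup>2)"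
proof -
  note pd1 = assms(1) and pd2 = assms(2) and fi1 = assms(3) and fi2 = assms(4)
    and ac1 = assms(5) and ac2 = assms(6)
  define w1 where "w1 = wfun p1 d1"
  define w2 where "w2 = wfun p2 d2"
  have pm[measurable]: "p1 \<in> borel_measurable borel" "p2 \<in> borel_measurable borel"
    using pd1 pd2 by (auto simp: prob_density_def)
  have dm[measurable]: "d1 \<in> borel_measurable borel" "d2 \<in> borel_measurable borel"
    using ac1 ac2 by (auto simp: ac_deriv_def)
  have wm[measurable]: "w1 \<in> borel_measurable borel" "w2 \<in> borel_measurable borel"
    unfolding w1_def w2_def by measurable
  have nn: "\<And>y. 0 \<le> p1 y" "\<And>y. 0 \<le> p2 y" "\<And>y. 0 \<le> w1 y" "\<And>y. 0 \<le> w2 y"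
    using pd1 pd2 by (auto simp: prob_density_def w1_def w2_def wfun_nonneg)
  have p1i: "integrable lborel p1" using pd1 by (simp add: prob_density_def)
  note df1 = density_facts[OF pd1 fi1 ac1, folded w1_def]
  note df2 = density_facts[OF pd2 fi2 ac2, folded w2_def]
  have I1: "(\<integral>\<^sup>+y. ennreal (w1 y) \<partial>lborel) \<le> ennreal I"
    unfolding w1_def by (rule fisher_w[OF fi1 ac1])
  have I2: "(\<integral>\<^sup>+y. ennreal (w2 y) \<partial>lborel) \<le> ennreal I"
    unfolding w2_def by (rule fisher_w[OF fi2 ac2])
  note pw = pointwise[OF pm dm wm nn df1(1) df2(1) df1(3) df2(3) I1 I2 p1i df1(2)]
  have last: "(\<integral>\<^sup>+ x. indicator {y. conv p1 p2 y > 0} x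
            * ennreal ((conv d1 d2 x)\<^sup>2 / conv p1 p2 x) \<partial>lborel) \<le> ennreal (I\<^sup>2)"
  proof -
    have "(\<integral>\<^sup>+ x. indicator {y. conv p1 p2 y > 0} x
            * ennreal ((conv d1 d2 x)\<^sup>2 / conv p1 p2 x) \<partial>lborel)
        \<le> (\<integral>\<^sup>+x. \<integral>\<^sup>+y. ennreal (w1 y * w2 (x - y)) \<partial>lborel \<partial>lborel)"
      by (intro nn_integral_mono) (auto simp: indicator_def intro: pw(4))
    also have "\<dots> = (\<integral>\<^sup>+y. \<integral>\<^sup>+x. ennreal (w1 y * w2 (x - y)) \<partial>lborel \<partial>lborel)"
      using lborel_pair.Fubini'[of "\<lambda>u v. ennreal (w1 u * w2 (v - u))"] by simp
    also have "\<dots> = (\<integral>\<^sup>+y. ennreal (w1 y) * (\<integral>\<^sup>+x. ennreal (w2 x) \<partial>lborel) \<partial>lborel)"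
    proof (intro nn_integral_cong)
      fix y
      have "(\<integral>\<^sup>+x. ennreal (w1 y * w2 (x - y)) \<partial>lborel) = ennreal (w1 y) * (\<integral>\<^sup>+x. ennreal (w2 (x - y)) \<partial>lborel)"
        by (simp add: ennreal_mult nn nn_integral_cmult)
      also have "(\<integral>\<^sup>+x. ennreal (w2 (x - y)) \<partial>lborel) = (\<integral>\<^sup>+x. ennreal (w2 x) \<partial>lborel)"
        using nn_integral_real_affine[of "\<lambda>x. ennreal (w2 x)" 1 "- y"] by simp
      finally show "(\<integral>\<^sup>+x. ennreal (w1 y * w2 (x - y)) \<partial>lborel) = ennreal (w1 y) * (\<integral>\<^sup>+x. ennreal (w2 x) \<partial>lborel)" .
    qed
    also have "\<dots> = (\<integral>\<^sup>+y. ennreal (w1 y) \<partial>lborel) * (\<integral>\<^sup>+x. ennreal (w2 x) \<partial>lborel)"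
      by (simp add: nn_integral_multc)
    also have "\<dots> \<le> ennreal I * ennreal I" using I1 I2 by (intro mult_mono) auto
    also have "\<dots> = ennreal (I\<^sup>2)" using df1(2) by (simp add: ennreal_mult[symmetric] power2_eq_square)
    finally show ?thesis .
  qed
  show ?thesis using pw(1,2,3) last by blast
qed

end
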